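(* There exists $r_0>0$ such that for every $0\le r\le r_0$, \[ F(\beta)=\int_0^\beta (r^2+2\sin^2y)^{1/2}\Bigl(\frac34-\sin^2y\Bigr)dy\ \ge\ 0\qquad\text{for all }\beta\ge0. \] Moreover, if $0<r\le r_0$, then $F(\beta)=0$ (for $\beta\ge0$) if and only if $\beta=0$. *)

theory Defs
  imports "HOL-Analysis.Analysis"
begin

definition F :: "real \<Rightarrow> real \<Rightarrow> real" where
  "F r \<beta> = integral {0..\<beta>} (\<lambda>y. sqrt (r\<^sup>2 + 2 * (sin y)\<^sup>2) * (3/4 - (sin y)\<^sup>2))"

end

theory Submission
  imports Defs
begin

definition g :: "real \<Rightarrow> real \<Rightarrow> real" where
  "g r y = sqrt (r\<^sup>2 + 2 * (sin y)\<^sup>2) * (3/4 - (sin y)\<^sup>2)"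

definition b :: "real \<Rightarrow> real \<Rightarrow> real" where
  "b r y = sqrt ((r\<^sup>2 + 3/2) * (4/3) * (sin y)\<^sup>2) * (3/4 - (sin y)\<^sup>2)"

lemma F_g: "F r \<beta> = integral {0..\<beta>} (g r)"
  unfolding F_def g_def by simp

lemma g_cont: "continuous_on S (g r)"
  unfolding g_def by (intro continuous_intros)

lemma b_cont: "continuous_on S (b r)"
  unfolding b_def by (intro continuous_intros)

lemma g_int: "g r integrable_on {x..y}"
  by (rule integrable_continuous_interval[OF g_cont])

lemma b_int: "b r integrable_on {x..y}"
  by (rule integrable_continuous_interval[OF b_cont])

lemma pointwise:
  fixes r t :: real
  assumes "t \<ge> 0"
  shows "sqrt ((r\<^sup>2 + 3/2) * (4/3) * t) * (3/4 - t) \<le> sqrt (r\<^sup>2 + 2 * t) * (3/4 - t)"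
proof (cases "t \<le> 3/4")
  case True
  have "(r\<^sup>2 + 3/2) * (4/3) * t \<le> r\<^sup>2 + 2 * t"
  proof -
    have "r\<^sup>2 + 2 * t - (r\<^sup>2 + 3/2) * (4/3) * t = r\<^sup>2 * (1 - 4/3 * t)" by (simp add: algebra_simps)
    also have "\<dots> \<ge> 0" using True by (intro mult_nonneg_nonneg) auto
    finally show ?thesis by simp
  qed
  then have "sqrt ((r\<^sup>2 + 3/2) * (4/3) * t) \<le> sqrt (r\<^sup>2 + 2 * t)" by (rule real_sqrt_le_mono)
  then show ?thesis using True by (intro mult_right_mono) auto
next
  case False
  have "(r\<^sup>2 + 3/2) * (4/3) * t \<ge> r\<^sup>2 + 2 * t"
  proof -
    have "(r\<^sup>2 + 3/2) * (4/3) * t - (r\<^sup>2 + 2 * t) = r\<^sup>2 * (4/3 * t - 1)" by (simp add: algebra_simps)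
    also have "\<dots> \<ge> 0" using False by (intro mult_nonneg_nonneg) auto
    finally show ?thesis by simp
  qed
  then have "sqrt ((r\<^sup>2 + 3/2) * (4/3) * t) \<ge> sqrt (r\<^sup>2 + 2 * t)" by (rule real_sqrt_le_mono)
  then show ?thesis using False by (intro mult_right_mono_neg) auto
qed

lemma b_le_g: "b r y \<le> g r y"
  unfolding b_def g_def by (rule pointwise) simp

definition Pf :: "real \<Rightarrow> real" where
  "Pf y = - (cos y * cos y * cos y) / 3 + cos y / 4"

lemma P_deriv: "(Pf has_real_derivative (sin y * (3/4 - (sin y)\<^sup>2))) (at y within S)"
proof -
  have "(Pf has_real_derivative (- (3 * (cos y * cos y) * (- sin y)) / 3 + (- sin y) / 4)) (at y within S)"
    unfolding Pf_def by (auto intro!: derivative_eq_intros)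
  moreover have "- (3 * (cos y * cos y) * (- sin y)) / 3 + (- sin y) / 4 = sin y * (3/4 - (sin y)\<^sup>2)"
  proof -
    have e: "cos y * cos y = 1 - sin y * sin y" using sin_cos_squared_add3[of y] by linarith
    show ?thesis by (simp add: e power2_eq_square field_simps)
  qed
  ultimately show ?thesis by simp
qed

lemma int_b:
  assumes "0 \<le> \<beta>" "\<beta> \<le> pi"
  shows "integral {0..\<beta>} (b r) = sqrt ((r\<^sup>2 + 3/2) * (4/3)) * (Pf \<beta> - Pf 0)"
proof -
  define C where "C = sqrt ((r\<^sup>2 + 3/2) * (4/3))"
  have eq: "b r y = C * (sin y * (3/4 - (sin y)\<^sup>2))" if "y \<in> {0..\<beta>}" for y
  proof -
    have "sin y \<ge> 0" using that assms by (intro sin_ge_zero) auto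
    have "sqrt ((r\<^sup>2 + 3/2) * (4/3) * (sin y)\<^sup>2) = C * sin y"
      unfolding C_def real_sqrt_mult real_sqrt_abs using \<open>sin y \<ge> 0\<close> by simp
    then show ?thesis unfolding b_def by simp
  qed
  have "((\<lambda>y. sin y * (3/4 - (sin y)\<^sup>2)) has_integral (Pf \<beta> - Pf 0)) {0..\<beta>}"
    using assms by (intro fundamental_theorem_of_calculus)
      (auto simp: has_real_derivative_iff_has_vector_derivative[symmetric] intro: P_deriv)
  then have "((\<lambda>y. C * (sin y * (3/4 - (sin y)\<^sup>2))) has_integral C * (Pf \<beta> - Pf 0)) {0..\<beta>}"
    by (rule has_integral_mult_right)
  then have "(b r has_integral C * (Pf \<beta> - Pf 0)) {0..\<beta>}"
    using has_integral_cong[of "{0..\<beta>}" "b r" "\<lambda>y. C * (sin y * (3/4 - (sin y)\<^sup>2))"] eq by simp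
  then show ?thesis unfolding C_def by (rule integral_unique)
qed

lemma P_nonneg: "Pf \<beta> - Pf 0 \<ge> 0"
proof -
  define c where "c = cos \<beta>"
  have "c \<le> 1" unfolding c_def by simp
  have "Pf \<beta> - Pf 0 = (1 - c) * (c + 1/2)\<^sup>2 / 3"
  proof -
    have a: "Pf \<beta> = -(c*c*c)/3 + c/4" by (simp add: Pf_def c_def)
    have b: "Pf 0 = -1/12" by (simp add: Pf_def)
    show ?thesis unfolding a b by (simp add: power2_eq_square field_simps)
  qed
  also have "\<dots> \<ge> 0" using \<open>c \<le> 1\<close> by simp
  finally show ?thesis .
qed

lemma F_period_part:
  assumes "0 \<le> \<beta>" "\<beta> \<le> pi" "0 \<le> r"
  shows "F r \<beta> \<ge> 0" and "0 < r \<Longrightarrow> 0 < \<beta> \<Longrightarrow> F r \<beta> > 0"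
proof -
  define d where "d y = g r y - b r y" for y
  have dint: "integral {0..\<beta>} d = F r \<beta> - integral {0..\<beta>} (b r)"
    unfolding d_def F_g by (rule integral_diff[OF g_int b_int])
  have d0: "integral {0..\<beta>} d \<ge> 0"
    by (rule integral_nonneg) (auto simp: d_def[abs_def] b_le_g intro!: integrable_diff g_int b_int)
  have bnn: "integral {0..\<beta>} (b r) \<ge> 0"
    using int_b[OF assms(1,2)] P_nonneg by simp
  show "F r \<beta> \<ge> 0" using dint d0 bnn by linarith
  assume "0 < r" "0 < \<beta>"
  have "integral {0..\<beta>} d \<noteq> 0"
  proof
    assume h: "integral {0..\<beta>} d = 0"
    have "d 0 = 0"
    proof (rule has_integral_0_cbox_imp_0[of 0 \<beta> d])
      show "continuous_on (cbox 0 \<beta>) d" unfolding d_def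
        by (intro continuous_on_diff g_cont b_cont)
      show "\<And>x. x \<in> box 0 \<beta> \<Longrightarrow> 0 \<le> d x" by (simp add: d_def b_le_g)
      show "(d has_integral 0) (cbox 0 \<beta>)"
      proof -
        have dI: "d integrable_on {0..\<beta>}" unfolding d_def[abs_def] by (intro integrable_diff g_int b_int)
        show ?thesis using h integrable_integral[OF dI] by simp
      qed
      show "box 0 \<beta> \<noteq> {}" using \<open>0 < \<beta>\<close> by simp
      show "0 \<in> cbox 0 \<beta>" using \<open>0 < \<beta>\<close> by simp
    qed
    moreover have "d 0 = sqrt (r\<^sup>2) * (3/4)" by (simp add: d_def g_def b_def)
    ultimately show False using \<open>0 < r\<close> by simp
  qed
  then show "F r \<beta> > 0" using dint d0 bnn by linarith
qed

lemma g_periodic: "g r (y + pi) = g r y"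
  unfolding g_def by (simp add: sin_add)

lemma F_shift:
  assumes "0 \<le> \<beta>"
  shows "F r (\<beta> + pi) = F r pi + F r \<beta>"
proof -
  have "F r (\<beta> + pi) = integral {0..pi} (g r) + integral {pi..\<beta>+pi} (g r)"
    unfolding F_g using Henstock_Kurzweil_Integration.integral_combine[where a=0 and c=pi and b="\<beta>+pi" and f="g r"] g_int assms by simp
  moreover have "integral {pi..\<beta>+pi} (g r) = integral {0..\<beta>} (g r \<circ> ((+) pi))"
    using integral_shift_Icc_real[of 0 \<beta> "g r" pi] by (simp add: add.commute)
  moreover have "(g r \<circ> ((+) pi)) = g r"
    by (auto simp: fun_eq_iff g_periodic add.commute)
  ultimately show ?thesis by (simp add: F_g)
qed

lemma F_shift_n:
  assumes "0 \<le> \<beta>"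
  shows "F r (\<beta> + real n * pi) = real n * F r pi + F r \<beta>"
proof (induction n)
  case 0 then show ?case by simp
next
  case (Suc n)
  have "F r (\<beta> + real (Suc n) * pi) = F r ((\<beta> + real n * pi) + pi)"
    by (simp add: algebra_simps)
  also have "\<dots> = F r pi + F r (\<beta> + real n * pi)"
    using assms by (intro F_shift) simp
  finally show ?case using Suc by (simp add: algebra_simps)
qed

theorem lemma1:
  shows "\<exists>r0 > 0. (\<forall>r. 0 \<le> r \<and> r \<le> r0 \<longrightarrow> (\<forall>\<beta> \<ge> 0. F r \<beta> \<ge> 0))
              \<and> (\<forall>r. 0 < r \<and> r \<le> r0 \<longrightarrow> (\<forall>\<beta> \<ge> 0. F r \<beta> = 0 \<longleftrightarrow> \<beta> = 0))"
proof -
  have dec: "\<exists>n::nat. \<exists>\<beta>'. 0 \<le> \<beta>' \<and> \<beta>' \<le> pi \<and> \<beta> = \<beta>' + real n * pi" if "\<beta> \<ge> 0" for \<beta>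
  proof -
    define n where "n = nat \<lfloor>\<beta> / pi\<rfloor>"
    have "real n = of_int \<lfloor>\<beta> / pi\<rfloor>" unfolding n_def using that by simp
    moreover have "of_int \<lfloor>\<beta> / pi\<rfloor> \<le> \<beta> / pi" "\<beta> / pi < of_int \<lfloor>\<beta> / pi\<rfloor> + 1"
      by linarith+
    ultimately have "real n \<le> \<beta> / pi" "\<beta> / pi < real n + 1" by simp_all
    then have "real n * pi \<le> \<beta> / pi * pi" "\<beta> / pi * pi < (real n + 1) * pi"
      by (intro mult_right_mono mult_strict_right_mono; simp)+
    then have "real n * pi \<le> \<beta>" "\<beta> < real n * pi + pi"
      by (simp_all add: algebra_simps)
    then show ?thesis by (intro exI[of _ n] exI[of _ "\<beta> - real n * pi"]) auto
  qed
  have nn: "F r \<beta> \<ge> 0" if t: "0 \<le> r" "0 \<le> \<beta>" for r \<beta>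
  proof -
    obtain n \<beta>' where h: "0 \<le> \<beta>'" "\<beta>' \<le> pi" "\<beta> = \<beta>' + real n * pi" using dec[OF t(2)] by blast
    have "F r \<beta> = real n * F r pi + F r \<beta>'" using F_shift_n h by simp
    moreover have "F r pi \<ge> 0" "F r \<beta>' \<ge> 0" using F_period_part h t by auto
    ultimately show ?thesis by simp
  qed
  have pos: "F r \<beta> > 0" if t: "0 < r" "0 < \<beta>" for r \<beta>
  proof -
    obtain n \<beta>' where h: "0 \<le> \<beta>'" "\<beta>' \<le> pi" "\<beta> = \<beta>' + real n * pi" using dec[of \<beta>] t by auto
    have e: "F r \<beta> = real n * F r pi + F r \<beta>'" using F_shift_n h by simp
    have p: "F r pi > 0" using F_period_part(2)[of pi r] that by simp
    have q: "F r \<beta>' \<ge> 0" using F_period_part h that by auto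
    show ?thesis
    proof (cases n)
      case 0
      then have "\<beta>' = \<beta>" using h by simp
      then show ?thesis using e 0 F_period_part(2)[of \<beta>' r] h that by simp
    next
      case (Suc m)
      then have "real n * F r pi > 0" using p by simp
      then show ?thesis using e q by linarith
    qed
  qed
  have z: "F r 0 = 0" for r by (simp add: F_def)
  show ?thesis
  proof (rule exI[of _ 1], intro conjI allI impI)
    fix r \<beta> :: real
    assume "0 \<le> r \<and> r \<le> 1" "0 \<le> \<beta>"
    then show "0 \<le> F r \<beta>" using nn by simp
  next
    fix r \<beta> :: real
    assume a: "0 < r \<and> r \<le> 1" "0 \<le> \<beta>"
    show "F r \<beta> = 0 \<longleftrightarrow> \<beta> = 0"
    proof
      assume "F r \<beta> = 0"
      then show "\<beta> = 0" using pos[of r \<beta>] a by fastforce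
    next
      assume "\<beta> = 0" then show "F r \<beta> = 0" using z by simp
    qed
  qed simp
qed

end
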